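(* Let $F$ be a field, $A\in\mathrm{gl}(m,F)$, $\rho$ a permutation of $\Omega_n$, and $\pi$ a permutation of $\Omega_{mn}$ such that $\operatorname{supp}P_\pi\subseteq\operatorname{supp}(A\,\dot\times\,P_\rho)$. Then there exist permutations $\lambda_0,\dots,\lambda_{n-1}$ of $\Omega_m$ such that $\pi(jn+s)=\lambda_s(j)\,n+\rho(s)$ for all $j\in\Omega_m$, $s\in\Omega_n$, and $\operatorname{supp}P_{\lambda_s}\subseteq\operatorname{supp}A$ for all $s\in\Omega_n$.
   Context: $\Omega_n=\{0,1,\dots,n-1\}$ indexes rows and columns; $\mathrm{gl}(m,F)$ is the space of $m\times m$ matrices over $F$. For a permutation $\pi$ of $\Omega_n$, $P_\pi$ is the matrix with $(i,j)$ entry $1$ if $i=\pi(j)$ and $0$ otherwise. For $A=[a_{i,j}]$, $\operatorname{supp}A=\{(i,j): a_{i,j}\neq 0\}$. For $A=[a_{i,j}]_{i,j\in\Omega_m}$ and $B=[b_{r,s}]_{r,s\in\Omega_n}$, the Kronecker product $A\,\dot\times\,B$ is the $mn\times mn$ matrix whose $(in+r,\,jn+s)$ entry is $a_{i,j}b_{r,s}$. *)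

theory Defs
  imports Main "HOL-Combinatorics.Permutations"
begin

text \<open>Matrices over a field indexed by naturals; an m x m matrix is a function
  nat => nat => 'a of which only the entries with indices in {..<m} matter.\<close>

definition perm_mat :: "(nat \<Rightarrow> nat) \<Rightarrow> nat \<Rightarrow> nat \<Rightarrow> 'a::zero_neq_one" where
  "perm_mat \<pi> i j = (if i = \<pi> j then 1 else 0)"

definition supp :: "nat \<Rightarrow> (nat \<Rightarrow> nat \<Rightarrow> 'a::zero) \<Rightarrow> (nat \<times> nat) set" where
  "supp m A = {(i, j). i < m \<and> j < m \<and> A i j \<noteq> 0}"

definition kron :: "nat \<Rightarrow> (nat \<Rightarrow> nat \<Rightarrow> 'a::times) \<Rightarrow> (nat \<Rightarrow> nat \<Rightarrow> 'a) \<Rightarrow> nat \<Rightarrow> nat \<Rightarrow> 'a" where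
  "kron n A B a b = A (a div n) (b div n) * B (a mod n) (b mod n)"

end

theory Submission
  imports Defs
begin

theorem theorem3p3:
  fixes A :: "nat \<Rightarrow> nat \<Rightarrow> 'a::field"
    and m n :: nat and \<rho> \<pi> :: "nat \<Rightarrow> nat"
  assumes "\<rho> permutes {..<n}"
    and "\<pi> permutes {..<m * n}"
    and "supp (m * n) (perm_mat \<pi> :: nat \<Rightarrow> nat \<Rightarrow> 'a) \<subseteq> supp (m * n) (kron n A (perm_mat \<rho>))"
  shows "\<exists>lam :: nat \<Rightarrow> nat \<Rightarrow> nat.
           (\<forall>s<n. lam s permutes {..<m}) \<and>
           (\<forall>j<m. \<forall>s<n. \<pi> (j * n + s) = lam s j * n + \<rho> s) \<and>
           (\<forall>s<n. supp m (perm_mat (lam s) :: nat \<Rightarrow> nat \<Rightarrow> 'a) \<subseteq> supp m A)"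
proof -
  have lt: "j * n + s < m * n" if "j < m" "s < n" for j s
  proof -
    have "j * n + s < j * n + n" using that by simp
    also have "\<dots> = Suc j * n" by simp
    also have "\<dots> \<le> m * n" using that by (intro mult_le_mono1) simp
    finally show ?thesis .
  qed
  have pilt: "\<pi> b < m * n" if "b < m * n" for b
    using permutes_in_image[OF assms(2)] that by auto
  have key: "A (\<pi> (j*n+s) div n) j \<noteq> 0 \<and> \<pi> (j*n+s) mod n = \<rho> s"
    if "j < m" "s < n" for j s
  proof -
    let ?b = "j*n+s"
    have "(\<pi> ?b, ?b) \<in> supp (m * n) (perm_mat \<pi> :: nat \<Rightarrow> nat \<Rightarrow> 'a)"
      using lt[OF that] pilt[OF lt[OF that]] by (simp add: supp_def perm_mat_def)
    with assms(3) have "kron n A (perm_mat \<rho>) (\<pi> ?b) ?b \<noteq> (0::'a)"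
      unfolding supp_def by blast
    moreover have "?b div n = j" "?b mod n = s" using that by auto
    ultimately show ?thesis
      by (auto simp: kron_def perm_mat_def split: if_splits)
  qed
  define lam where "lam s j = (if j < m then \<pi> (j*n+s) div n else j)" for s j
  have eq: "\<pi> (j * n + s) = lam s j * n + \<rho> s" if "j < m" "s < n" for j s
    using key[OF that] that unfolding lam_def
    by (metis div_mult_mod_eq)
  have perm: "lam s permutes {..<m}" if s: "s < n" for s
  proof -
    have img: "lam s ` {..<m} \<subseteq> {..<m}"
    proof
      fix x assume "x \<in> lam s ` {..<m}"
      then obtain j where j: "j < m" "x = lam s j" by auto
      have "\<pi> (j*n+s) < m * n" using pilt[OF lt[OF j(1) s]] .
      then have "\<pi> (j*n+s) div n < m" by (simp add: less_mult_imp_div_less)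
      then show "x \<in> {..<m}" using j by (simp add: lam_def)
    qed
    have inj: "inj_on (lam s) {..<m}"
    proof (rule inj_onI)
      fix j j' assume "j \<in> {..<m}" "j' \<in> {..<m}" "lam s j = lam s j'"
      then have "\<pi> (j*n+s) = \<pi> (j'*n+s)" using eq s by auto
      then have "j*n+s = j'*n+s" using permutes_inj[OF assms(2)] by (auto dest: injD)
      then show "j = j'" using s by simp
    qed
    have "lam s ` {..<m} = {..<m}" using endo_inj_surj[OF _ img inj] by simp
    then have "bij_betw (lam s) {..<m} {..<m}" using inj by (simp add: bij_betw_def)
    then show ?thesis by (rule bij_imp_permutes) (simp add: lam_def)
  qed
  have sp: "supp m (perm_mat (lam s) :: nat \<Rightarrow> nat \<Rightarrow> 'a) \<subseteq> supp m A" if "s < n" for s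
  proof
    fix p assume "p \<in> supp m (perm_mat (lam s) :: nat \<Rightarrow> nat \<Rightarrow> 'a)"
    then obtain i j where p: "p = (i,j)" "i < m" "j < m" "i = lam s j"
      by (auto simp: supp_def perm_mat_def split: if_splits)
    then show "p \<in> supp m A" using key[OF p(3) that] by (simp add: supp_def lam_def)
  qed
  show ?thesis using perm eq sp by blast
qed

end
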